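(* Let $G=(V,E)$ be a finite graph and let $W=(w_1,\dots,w_m)$ be a selection sequence of $G$ which has the property $T_1$. Then $|W|=\alpha(G)$, where $\alpha(G)$ denotes the size of a maximum independent set of $G$.
   Context: An independent set of $G$ is a set of vertices no two of which are adjacent; $\alpha(G)$ is the maximum size of an independent set. A selection sequence of $G$ is a finite sequence $W=(w_1,\dots,w_m)$ ($m\le |V|$) of distinct vertices of $V$ such that no vertex of $W$ is adjacent to another vertex of $W$, and every vertex of $V$ is either in $W$ or adjacent to a vertex of $W$. Given a selection sequence, set $G_0=G$ and, for $1\le i\le m$, let $G_i$ be the subgraph of $G$ induced by the vertices that are neither in $\{w_1,\dots,w_i\}$ nor adjacent to any of $w_1,\dots,w_i$ (the remaining graphs). The selection sequence $W$ has the property $T_1$ if for every $1\le i\le m$ the degree of $w_i$ in $G_{i-1}$ is at most $1$. *)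

theory Defs
  imports Main
begin

definition finite_graph :: "'a set \<Rightarrow> ('a \<Rightarrow> 'a \<Rightarrow> bool) \<Rightarrow> bool" where
  "finite_graph V E \<longleftrightarrow> finite V \<and> (\<forall>u v. E u v \<longrightarrow> u \<in> V \<and> v \<in> V)
     \<and> (\<forall>u v. E u v \<longrightarrow> E v u) \<and> (\<forall>v. \<not> E v v)"

definition independent_set :: "'a set \<Rightarrow> ('a \<Rightarrow> 'a \<Rightarrow> bool) \<Rightarrow> 'a set \<Rightarrow> bool" where
  "independent_set V E S \<longleftrightarrow> S \<subseteq> V \<and> (\<forall>u\<in>S. \<forall>v\<in>S. \<not> E u v)"

definition independence_number :: "'a set \<Rightarrow> ('a \<Rightarrow> 'a \<Rightarrow> bool) \<Rightarrow> nat" where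
  "independence_number V E = Max (card ` {S. independent_set V E S})"

definition selection_sequence :: "'a set \<Rightarrow> ('a \<Rightarrow> 'a \<Rightarrow> bool) \<Rightarrow> 'a list \<Rightarrow> bool" where
  "selection_sequence V E W \<longleftrightarrow> distinct W \<and> set W \<subseteq> V
     \<and> (\<forall>u\<in>set W. \<forall>v\<in>set W. \<not> E u v)
     \<and> (\<forall>v\<in>V. v \<in> set W \<or> (\<exists>w\<in>set W. E v w))"

text \<open>Vertex set of the remaining graph G_i (i = number of selected vertices):
  vertices neither in {w_1..w_i} nor adjacent to any of them. G_i is the
  induced subgraph on this set.\<close>
definition remaining :: "'a set \<Rightarrow> ('a \<Rightarrow> 'a \<Rightarrow> bool) \<Rightarrow> 'a list \<Rightarrow> nat \<Rightarrow> 'a set" where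
  "remaining V E W i = {v \<in> V. \<forall>w\<in>set (take i W). v \<noteq> w \<and> \<not> E v w}"

definition degree_in :: "('a \<Rightarrow> 'a \<Rightarrow> bool) \<Rightarrow> 'a set \<Rightarrow> 'a \<Rightarrow> nat" where
  "degree_in E U v = card {u \<in> U. E v u}"

text \<open>Property T_1: for 1 \<le> i \<le> m, deg of w_i in G_{i-1} is at most 1
  (0-based: W ! i in remaining graph after i selections).\<close>
definition has_T1 :: "'a set \<Rightarrow> ('a \<Rightarrow> 'a \<Rightarrow> bool) \<Rightarrow> 'a list \<Rightarrow> bool" where
  "has_T1 V E W \<longleftrightarrow> (\<forall>i < length W. degree_in E (remaining V E W i) (W ! i) \<le> 1)"

end

theory Submission
  imports Defs
begin

lemma remaining_Suc:
  assumes "i < length W"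
  shows "remaining V E W (Suc i) = {v \<in> remaining V E W i. v \<noteq> W ! i \<and> \<not> E v (W ! i)}"
  using assms by (auto simp: remaining_def take_Suc_conv_app_nth)

lemma indep_bound:
  assumes g: "finite_graph V E" and s: "selection_sequence V E W" and t: "has_T1 V E W"
    and S: "independent_set V E S"
  shows "card S \<le> length W"
proof -
  let ?m = "length W"
  let ?R = "remaining V E W"
  have fin: "finite V" using g by (simp add: finite_graph_def)
  have SV: "S \<subseteq> V" and Sind: "\<forall>u\<in>S. \<forall>v\<in>S. \<not> E u v" using S by (auto simp: independent_set_def)
  have sym: "\<And>u v. E u v \<Longrightarrow> E v u" using g by (simp add: finite_graph_def)
  have Rm: "\<And>v. v \<notin> ?R ?m"
    using s by (auto simp: remaining_def selection_sequence_def)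
  define f where "f s = (LEAST i. s \<notin> ?R (Suc i))" for s
  have R0: "?R 0 = V" by (simp add: remaining_def)
  have fprop: "f s < ?m \<and> s \<in> ?R (f s) \<and> s \<notin> ?R (Suc (f s))" if "s \<in> S" for s
  proof -
    have sV: "s \<in> V" using that SV by auto
    have m0: "?m > 0" using Rm[of s] sV R0 by (cases "?m = 0") auto
    have ex: "s \<notin> ?R (Suc (?m - 1))" using Rm[of s] m0 by simp
    have a: "s \<notin> ?R (Suc (f s))" unfolding f_def by (rule LeastI[of _ "?m - 1"]) (rule ex)
    have b: "f s \<le> ?m - 1" unfolding f_def by (rule Least_le) (rule ex)
    have c: "s \<in> ?R (f s)"
    proof (cases "f s")
      case 0 then show ?thesis using R0 sV by simp
    next
      case (Suc k)
      have "\<not> (s \<notin> ?R (Suc k))"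
        using not_less_Least[of k "\<lambda>i. s \<notin> ?R (Suc i)"] Suc unfolding f_def by simp
      then show ?thesis using Suc by simp
    qed
    have "f s < ?m" using b m0 by linarith
    then show ?thesis using a c by blast
  qed
  have nb: "s = W ! f s \<or> E s (W ! f s)" if "s \<in> S" for s
    using fprop[OF that] remaining_Suc[of "f s" W V E] by auto
  have inj: "inj_on f S"
  proof (rule inj_onI)
    fix x y assume x: "x \<in> S" and y: "y \<in> S" and eq: "f x = f y"
    show "x = y"
    proof (rule ccontr)
      assume ne: "x \<noteq> y"
      let ?w = "W ! f x"
      have nx: "\<not> E x y" "\<not> E y x" using Sind x y by auto
      have ex: "E x ?w" using nb[OF x] nb[OF y] eq nx ne by auto
      have ey: "E y ?w" using nb[OF x] nb[OF y] eq nx ne by auto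
      have sub: "{x, y} \<subseteq> {u \<in> ?R (f x). E ?w u}"
        using ex ey sym fprop[OF x] fprop[OF y] eq by auto
      have "finite {u \<in> ?R (f x). E ?w u}" using fin by (simp add: remaining_def)
      then have "card {x, y} \<le> card {u \<in> ?R (f x). E ?w u}" using sub by (rule card_mono)
      moreover have "degree_in E (?R (f x)) ?w \<le> 1" using t fprop[OF x] by (simp add: has_T1_def)
      ultimately show False using ne by (simp add: degree_in_def)
    qed
  qed
  have "f ` S \<subseteq> {..<?m}" using fprop by auto
  then have "card (f ` S) \<le> ?m" by (metis card_lessThan card_mono finite_lessThan)
  then show ?thesis using card_image[OF inj] by simp
qed

theorem lemma1:
  fixes V :: "'a set" and E :: "'a \<Rightarrow> 'a \<Rightarrow> bool" and W :: "'a list"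
  assumes "finite_graph V E"
    and "selection_sequence V E W"
    and "has_T1 V E W"
  shows "length W = independence_number V E"
proof -
  have fin: "finite V" using assms(1) by (simp add: finite_graph_def)
  have "finite {S. independent_set V E S}"
    by (rule finite_subset[of _ "Pow V"]) (auto simp: independent_set_def fin)
  moreover have "independent_set V E (set W)" using assms(2)
    by (auto simp: independent_set_def selection_sequence_def)
  moreover have "card (set W) = length W" using assms(2)
    by (simp add: selection_sequence_def distinct_card)
  ultimately show ?thesis unfolding independence_number_def
    using indep_bound[OF assms]
    by (intro Max_eqI[symmetric]) (auto, metis image_eqI mem_Collect_eq)
qed

end
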